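(* Let $b,\ell\ge1$, $s=2^b$ and $m=(s/2)^\ell=2^{(b-1)\ell}$. Let $\mathcal F_{b,\ell}$ be the family of all graphs obtained from $G_{b,\ell}$ by deleting an arbitrary subset of the level-$\ell$ vertices $\{v_{\ell,\vec j}:\vec j\in[0,s-1]^\ell\}$ together with their incident edges. Then any distance labeling scheme for $\mathcal F_{b,\ell}$ assigns, for some graph in $\mathcal F_{b,\ell}$, to some vertex a label of at least $\textsc{SumIndex}(m)-b\ell$ bits.
   Context: Notation $[a,b]=\{a,\dots,b\}$. Fix $b,\ell\ge1$, $s=2^b$, $A=3\ell s^2$. The weighted graph $H_{b,\ell}$ has vertex set $\bigcup_{i=0}^{2\ell}V_i$, $V_i=\{v_{i,\vec j}:\vec j\in[0,s-1]^\ell\}$; for $i\in[0,2\ell-1]$ let $c(i)=i+1$ if $i<\ell$, $c(i)=2\ell-i$ if $i\ge\ell$; $v_{i,\vec j}$ and $v_{i+1,\vec j'}$ are adjacent iff $j_k=j'_k$ for all $k\ne c(i)$, with weight $A+(j_{c(i)}-j'_{c(i)})^2$; no other edges. The unweighted graph $G_{b,\ell}$: each $v\in V_i$ is kept and gets attached (root adjacent to $v$) a complete binary tree $T^{\mathrm{in}}_v$ of depth $b$ (only if $i>0$) with leaves $v^{\mathrm{in}}_u$ for the neighbors $u\in V_{i-1}$, and a complete binary tree $T^{\mathrm{out}}_v$ of depth $b$ (only if $i<2\ell$) with leaves $v^{\mathrm{out}}_u$ for the neighbors $u\in V_{i+1}$; trees disjoint; for each edge $e=\{u,v\}$ of $H_{b,\ell}$,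 $u\in V_i,v\in V_{i+1}$, the leaves $u^{\mathrm{out}}_v$ and $v^{\mathrm{in}}_u$ are joined by a path of length $w(e)-2b-2$ through new vertices. A distance labeling scheme for a family $\mathcal F$ of graphs consists of a fixed decoding function $f$ and, for each $G\in\mathcal F$, an assignment of binary strings $\mathsf{label}(u)$ to vertices $u\in V(G)$, such that $f(\mathsf{label}(u),\mathsf{label}(v))=\mathrm{dist}_G(u,v)$ for all $u,v$. Sum-Index problem on $\mathbb Z_n$: a string $S=S_0\dots S_{n-1}\in\{0,1\}^n$ is known to both Alice and Bob; Alice also holds $a\in[0,n-1]$, Bob holds $b'\in[0,n-1]$; each simultaneously sends one message to a referee, who must output $S_{(a+b')\bmod n}$ from the two messages alone. $\textsc{SumIndex}(n)$ denotes the minimum, over deterministic such protocols, of the maximum (over inputs and both players) message length in bits. *)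

theory Defs
  imports Main "HOL-Library.Extended_Nat"
begin

definition is_walk :: "'a set \<Rightarrow> ('a \<Rightarrow> 'a \<Rightarrow> bool) \<Rightarrow> 'a list \<Rightarrow> bool" where
  "is_walk V E xs \<longleftrightarrow> xs \<noteq> [] \<and> set xs \<subseteq> V \<and>
     (\<forall>i. Suc i < length xs \<longrightarrow> E (xs ! i) (xs ! Suc i))"

definition gdist :: "'a set \<Rightarrow> ('a \<Rightarrow> 'a \<Rightarrow> bool) \<Rightarrow> 'a \<Rightarrow> 'a \<Rightarrow> enat" where
  "gdist V E u v = (INF xs \<in> {xs. is_walk V E xs \<and> hd xs = u \<and> last xs = v}.
                      enat (length xs - 1))"

text \<open>Vertices: Main i j is v_{i,j}; TIn i j p / TOut i j p is the node of the tree
  T^in / T^out of v_{i,j} reached from the root by the branch choices p (root = []);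
  PathV i j j' k is the k-th internal vertex of the path for the H-edge
  {v_{i,j}, v_{i+1,j'}}.  Index vectors are lists of length l (coordinate k of the
  paper, k in [1,l], is list position k-1).\<close>

datatype vert =
    Main nat "nat list"
  | TIn nat "nat list" "bool list"
  | TOut nat "nat list" "bool list"
  | PathV nat "nat list" "nat list" nat

definition sH :: "nat \<Rightarrow> nat" where "sH b = 2 ^ b"

definition AH :: "nat \<Rightarrow> nat \<Rightarrow> nat" where "AH b l = 3 * l * (sH b)^2"

definition idx :: "nat \<Rightarrow> nat \<Rightarrow> nat list set" where
  "idx b l = {j. length j = l \<and> (\<forall>k<l. j ! k < sH b)}"

definition cH :: "nat \<Rightarrow> nat \<Rightarrow> nat" where
  "cH l i = (if i < l then i + 1 else 2 * l - i)"

definition Hedge :: "nat \<Rightarrow> nat \<Rightarrow> nat \<Rightarrow> nat list \<Rightarrow> nat list \<Rightarrow> bool" where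
  "Hedge b l i j j' \<longleftrightarrow> i < 2 * l \<and> j \<in> idx b l \<and> j' \<in> idx b l \<and>
     (\<forall>k<l. k \<noteq> cH l i - 1 \<longrightarrow> j ! k = j' ! k)"

definition wH :: "nat \<Rightarrow> nat \<Rightarrow> nat \<Rightarrow> nat list \<Rightarrow> nat list \<Rightarrow> nat" where
  "wH b l i j j' = AH b l + (nat \<bar>int (j ! (cH l i - 1)) - int (j' ! (cH l i - 1))\<bar>)^2"

definition plen :: "nat \<Rightarrow> nat \<Rightarrow> nat \<Rightarrow> nat list \<Rightarrow> nat list \<Rightarrow> nat" where
  "plen b l i j j' = wH b l i j j' - 2 * b - 2"

text \<open>Binary encoding (length b) of a number in [0, 2^b - 1]; it fixes the bijection
  between the leaves of a tree and the s neighbours they stand for.\<close>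
definition bits :: "nat \<Rightarrow> nat \<Rightarrow> bool list" where
  "bits b x = map (\<lambda>t. odd (x div 2 ^ t)) [0..<b]"

text \<open>Vertex number k (0..plen) on the path from the leaf u^out_v to the leaf v^in_u,
  where u = v_{i,j}, v = v_{i+1,j'}.\<close>
definition pnode :: "nat \<Rightarrow> nat \<Rightarrow> nat \<Rightarrow> nat list \<Rightarrow> nat list \<Rightarrow> nat \<Rightarrow> vert" where
  "pnode b l i j j' k =
     (if k = 0 then TOut i j (bits b (j' ! (cH l i - 1)))
      else if k = plen b l i j j' then TIn (Suc i) j' (bits b (j ! (cH l i - 1)))
      else PathV i j j' k)"

definition GV :: "nat \<Rightarrow> nat \<Rightarrow> vert set" where
  "GV b l =
     {Main i j | i j. i \<le> 2 * l \<and> j \<in> idx b l}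
   \<union> {TIn i j p | i j p. 0 < i \<and> i \<le> 2 * l \<and> j \<in> idx b l \<and> length p \<le> b}
   \<union> {TOut i j p | i j p. i < 2 * l \<and> j \<in> idx b l \<and> length p \<le> b}
   \<union> {PathV i j j' k | i j j' k. Hedge b l i j j' \<and> 0 < k \<and> k < plen b l i j j'}"

definition Garc :: "nat \<Rightarrow> nat \<Rightarrow> vert \<Rightarrow> vert \<Rightarrow> bool" where
  "Garc b l x y \<longleftrightarrow>
     (\<exists>i j. i \<le> 2 * l \<and> j \<in> idx b l \<and> 0 < i \<and> x = Main i j \<and> y = TIn i j [])
   \<or> (\<exists>i j. j \<in> idx b l \<and> i < 2 * l \<and> x = Main i j \<and> y = TOut i j [])
   \<or> (\<exists>i j p a. 0 < i \<and> i \<le> 2 * l \<and> j \<in> idx b l \<and> length p < b \<and>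
        x = TIn i j p \<and> y = TIn i j (p @ [a]))
   \<or> (\<exists>i j p a. i < 2 * l \<and> j \<in> idx b l \<and> length p < b \<and>
        x = TOut i j p \<and> y = TOut i j (p @ [a]))
   \<or> (\<exists>i j j' k. Hedge b l i j j' \<and> k < plen b l i j j' \<and>
        x = pnode b l i j j' k \<and> y = pnode b l i j j' (Suc k))"

definition GE :: "nat \<Rightarrow> nat \<Rightarrow> vert \<Rightarrow> vert \<Rightarrow> bool" where
  "GE b l x y \<longleftrightarrow> Garc b l x y \<or> Garc b l y x"

text \<open>The member of the family F_{b,l} obtained by deleting the level-l vertices
  v_{l,j}, j \<in> D (incident edges disappear since walks must stay in the vertex set).\<close>
definition GVdel :: "nat \<Rightarrow> nat \<Rightarrow> nat list set \<Rightarrow> vert set" where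
  "GVdel b l D = GV b l - {Main l j | j. j \<in> D}"

definition sumindex_protocol ::
  "nat \<Rightarrow> nat \<Rightarrow> (bool list \<Rightarrow> nat \<Rightarrow> bool list) \<Rightarrow> (bool list \<Rightarrow> nat \<Rightarrow> bool list)
     \<Rightarrow> (bool list \<Rightarrow> bool list \<Rightarrow> bool) \<Rightarrow> bool" where
  "sumindex_protocol n c MA MB R \<longleftrightarrow>
     (\<forall>S a b'. length S = n \<and> a < n \<and> b' < n \<longrightarrow>
        R (MA S a) (MB S b') = S ! ((a + b') mod n) \<and>
        length (MA S a) \<le> c \<and> length (MB S b') \<le> c)"

definition SumIndex :: "nat \<Rightarrow> nat" where
  "SumIndex n = (LEAST c. \<exists>MA MB R. sumindex_protocol n c MA MB R)"

end

theory Submission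
  imports Defs
begin


fun wk :: "'a set \<Rightarrow> ('a \<Rightarrow> 'a \<Rightarrow> bool) \<Rightarrow> 'a list \<Rightarrow> bool" where
  "wk V E [] = False"
| "wk V E [x] = (x \<in> V)"
| "wk V E (x # y # zs) = (x \<in> V \<and> E x y \<and> wk V E (y # zs))"

lemma is_walk_wk: "is_walk V E xs = wk V E xs"
proof (induction V E xs rule: wk.induct)
  case (1 V E) then show ?case by (simp add: is_walk_def)
next
  case (2 V E x) then show ?case by (simp add: is_walk_def)
next
  case (3 V E x y zs)
  have "is_walk V E (x # y # zs) \<longleftrightarrow> x \<in> V \<and> E x y \<and> is_walk V E (y # zs)"
  proof
    assume h: "is_walk V E (x # y # zs)"
    have hh: "\<And>i. Suc i < length (x # y # zs) \<Longrightarrow> E ((x # y # zs) ! i) ((x # y # zs) ! Suc i)"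
      using h unfolding is_walk_def by blast
    have "E x y" using hh[of 0] by simp
    moreover have "\<And>i. Suc i < length (y # zs) \<Longrightarrow> E ((y # zs) ! i) ((y # zs) ! Suc i)"
      using hh[of "Suc i" for i] by simp
    then have "is_walk V E (y # zs)" using h unfolding is_walk_def by auto
    ultimately show "x \<in> V \<and> E x y \<and> is_walk V E (y # zs)" using h unfolding is_walk_def by auto
  next
    assume h: "x \<in> V \<and> E x y \<and> is_walk V E (y # zs)"
    show "is_walk V E (x # y # zs)" unfolding is_walk_def
    proof (intro conjI allI impI)
      fix i assume i: "Suc i < length (x # y # zs)"
      show "E ((x # y # zs) ! i) ((x # y # zs) ! Suc i)"
      proof (cases i)
        case 0 then show ?thesis using h by simp
      next
        case (Suc i')
        have "Suc i' < length (y # zs)" using i Suc by simp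
        then have "E ((y # zs) ! i') ((y # zs) ! Suc i')" using h unfolding is_walk_def by blast
        then show ?thesis using Suc by simp
      qed
    qed (use h in \<open>auto simp: is_walk_def\<close>)
  qed
  then show ?case using 3 by simp
qed

lemma wk_Cons: "wk V E (x # xs) \<longleftrightarrow> x \<in> V \<and> (xs = [] \<or> (E x (hd xs) \<and> wk V E xs))"
  by (cases xs) auto

lemma wk_split: "wk V E (ys @ w # zs) \<Longrightarrow> wk V E (ys @ [w]) \<and> wk V E (w # zs)"
proof (induction ys)
  case Nil then show ?case by (simp add: wk_Cons)
next
  case (Cons y ys) then show ?case
    by (cases ys) (auto simp: wk_Cons)
qed

lemma wk_set: "wk V E xs \<Longrightarrow> x \<in> set xs \<Longrightarrow> x \<in> V"
  by (induction V E xs rule: wk.induct) auto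

lemma wk_pot:
  assumes lip: "\<And>x y. E x y \<Longrightarrow> \<bar>phi x - phi y\<bar> \<le> (1::int)"
  shows "wk V E xs \<Longrightarrow> phi (last xs) - phi (hd xs) \<le> int (length xs) - 1"
proof (induction xs)
  case (Cons x xs)
  show ?case
  proof (cases xs)
    case Nil then show ?thesis by simp
  next
    case (Cons y ys)
    then have "phi (last xs) - phi y \<le> int (length xs) - 1" "\<bar>phi x - phi y\<bar> \<le> 1"
      using Cons.IH Cons.prems lip by auto
    then show ?thesis using Cons by auto
  qed
qed simp

inductive reach :: "'a set \<Rightarrow> ('a \<Rightarrow> 'a \<Rightarrow> bool) \<Rightarrow> 'a \<Rightarrow> 'a \<Rightarrow> nat \<Rightarrow> bool"
  for V E where
  r0: "u \<in> V \<Longrightarrow> reach V E u u 0"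
| rS: "u \<in> V \<Longrightarrow> E u w \<Longrightarrow> reach V E w v n \<Longrightarrow> reach V E u v (Suc n)"

lemma reach_trans: "reach V E u v n \<Longrightarrow> reach V E v w m \<Longrightarrow> reach V E u w (n + m)"
proof (induction rule: reach.induct)
  case (r0 u) then show ?case by simp
next
  case (rS u w v n) then show ?case by (simp add: reach.rS)
qed

lemma reach_edge: "u \<in> V \<Longrightarrow> v \<in> V \<Longrightarrow> E u v \<Longrightarrow> reach V E u v 1"
proof -
  assume a: "u \<in> V" "v \<in> V" "E u v"
  have "reach V E v v 0" using a(2) by (rule reach.r0)
  then show ?thesis using reach.rS[of u V E v v 0] a by simp
qed

lemma reach_walk: "reach V E u v n \<Longrightarrow> \<exists>xs. wk V E xs \<and> hd xs = u \<and> last xs = v \<and> length xs = Suc n"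
proof (induction rule: reach.induct)
  case (r0 u) then show ?case by (intro exI[of _ "[u]"]) auto
next
  case (rS u w v n)
  then obtain xs where "wk V E xs" "hd xs = w" "last xs = v" "length xs = Suc n" by blast
  then show ?case using rS.hyps by (intro exI[of _ "u # xs"]) (auto simp: wk_Cons)
qed

lemma reach_gdist: "reach V E u v n \<Longrightarrow> gdist V E u v \<le> enat n"
proof -
  assume r: "reach V E u v n"
  obtain xs where xs: "wk V E xs" "hd xs = u" "last xs = v" "length xs = Suc n"
    using reach_walk[OF r] by (elim exE conjE)
  have mem: "xs \<in> {xs. is_walk V E xs \<and> hd xs = u \<and> last xs = v}"
    using xs by (simp add: is_walk_wk)
  have "gdist V E u v \<le> enat (length xs - 1)"
    unfolding gdist_def using mem by (rule INF_lower)
  moreover have "length xs - 1 = n" using xs(4) by simp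
  ultimately show ?thesis by simp
qed



definition ph :: "nat \<Rightarrow> nat \<Rightarrow> nat \<Rightarrow> nat" where
  "ph l k i = (if i \<le> k then 0 else if i + k < 2 * l then 1 else 2)"

lemma cH_lt: "i < 2 * l \<Longrightarrow> cH l i - 1 < l"
  by (auto simp: cH_def)

lemma ph_step: "k < l \<Longrightarrow> i < 2 * l \<Longrightarrow>
   ph l k (Suc i) = ph l k i + (if k = cH l i - 1 then 1 else 0)"
  unfolding ph_def cH_def by auto

definition psi :: "nat \<Rightarrow> nat \<Rightarrow> (nat \<Rightarrow> int) \<Rightarrow> nat \<Rightarrow> nat list \<Rightarrow> int" where
  "psi b l d i j = int (AH b l) * int i +
     (\<Sum>k<l. - 2 * d k * int (j ! k) - int (ph l k i) * (d k)^2)"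

lemma psi_step:
  assumes "Hedge b l i j j'"
  shows "psi b l d (Suc i) j' - psi b l d i j =
     int (AH b l) - 2 * d (cH l i - 1) * (int (j' ! (cH l i - 1)) - int (j ! (cH l i - 1)))
       - (d (cH l i - 1))^2"
proof -
  let ?c = "cH l i - 1"
  have i: "i < 2 * l" using assms by (simp add: Hedge_def)
  have c: "?c < l" using cH_lt[OF i] .
  have t: "(- 2 * d k * int (j' ! k) - int (ph l k (Suc i)) * (d k)^2)
        - (- 2 * d k * int (j ! k) - int (ph l k i) * (d k)^2)
        = (if k = ?c then - 2 * d ?c * (int (j' ! ?c) - int (j ! ?c)) - (d ?c)^2 else 0)"
    if k: "k < l" for k
  proof (cases "k = ?c")
    case True
    then show ?thesis using ph_step[OF k i] by (simp add: algebra_simps)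
  next
    case False
    then have "j ! k = j' ! k" using assms k by (simp add: Hedge_def)
    then show ?thesis using ph_step[OF k i] False by simp
  qed
  have "psi b l d (Suc i) j' - psi b l d i j =
     int (AH b l) + ((\<Sum>k<l. - 2 * d k * int (j' ! k) - int (ph l k (Suc i)) * (d k)^2)
        - (\<Sum>k<l. - 2 * d k * int (j ! k) - int (ph l k i) * (d k)^2))"
    unfolding psi_def by (simp add: algebra_simps)
  also have "(\<Sum>k<l. - 2 * d k * int (j' ! k) - int (ph l k (Suc i)) * (d k)^2)
        - (\<Sum>k<l. - 2 * d k * int (j ! k) - int (ph l k i) * (d k)^2)
     = (\<Sum>k<l. (if k = ?c then - 2 * d ?c * (int (j' ! ?c) - int (j ! ?c)) - (d ?c)^2 else 0))"
    unfolding sum_subtractf[symmetric] by (rule sum.cong[OF refl], rule t, simp)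
  also have "\<dots> = - 2 * d ?c * (int (j' ! ?c) - int (j ! ?c)) - (d ?c)^2"
    using c by simp
  finally show ?thesis by simp
qed

lemma b_le_pow: "Suc b \<le> 2 ^ b"
  by (induction b) auto

lemma wH_int: "int (wH b l i j j') = int (AH b l) + (int (j ! (cH l i - 1)) - int (j' ! (cH l i - 1)))^2"
  unfolding wH_def by simp

lemma psi_bounds:
  assumes "Hedge b l i j j'" "b \<ge> 1" "l \<ge> 1" and dB: "\<forall>k<l. \<bar>d k\<bar> \<le> int (sH b)"
  shows "psi b l d (Suc i) j' - psi b l d i j \<le> int (wH b l i j j')"
    and "psi b l d (Suc i) j' - psi b l d i j \<ge> 4 * int b + 4 - int (wH b l i j j')"
proof -
  let ?c = "cH l i - 1"
  have i: "i < 2 * l" using assms by (simp add: Hedge_def)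
  have c: "?c < l" using cH_lt[OF i] .
  define D where "D = int (j' ! ?c) - int (j ! ?c)"
  define e where "e = d ?c"
  define A where "A = int (AH b l)"
  define s where "s = int (sH b)"
  have st: "psi b l d (Suc i) j' - psi b l d i j = A - 2 * e * D - e^2"
    using psi_step[OF assms(1)] by (simp add: D_def e_def A_def)
  have w: "int (wH b l i j j') = A + D^2"
    unfolding wH_int A_def D_def by (simp add: power2_commute)
  have "0 \<le> (D + e)^2" by simp
  then show "psi b l d (Suc i) j' - psi b l d i j \<le> int (wH b l i j j')"
    unfolding st w by (simp add: power2_eq_square algebra_simps)
  have eb: "\<bar>e\<bar> \<le> s" using dB c by (simp add: e_def s_def)
  then have "e^2 \<le> s^2" using abs_le_square_iff[of e s] by (simp add: s_def)
  moreover have "0 \<le> (D - e)^2" by simp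
  moreover have "3 * s^2 \<le> A"
  proof -
    have "3 * (sH b)^2 \<le> AH b l" using assms(3) unfolding AH_def by simp
    then show ?thesis unfolding A_def s_def by (metis of_nat_le_iff of_nat_mult of_nat_numeral of_nat_power)
  qed
  moreover have "int b + 1 \<le> s"
  proof -
    have "int (Suc b) \<le> int (2 ^ b)" using b_le_pow[of b] by (simp only: of_nat_le_iff)
    then show ?thesis unfolding s_def sH_def by simp
  qed
  moreover have "s \<le> s^2"
  proof -
    have "1 \<le> s" using \<open>int b + 1 \<le> s\<close> by simp
    then show ?thesis using mult_left_mono[of 1 s s] by (simp add: power2_eq_square)
  qed
  ultimately have "e*e \<le> s*s" "0 \<le> D*D - 2*e*D + e*e" "3*(s*s) \<le> A" "int b + 1 \<le> s" "s \<le> s*s"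
    by (simp_all add: power2_eq_square algebra_simps)
  then show "psi b l d (Suc i) j' - psi b l d i j \<ge> 4 * int b + 4 - int (wH b l i j j')"
    unfolding st w power2_eq_square by linarith
qed



fun phi :: "nat \<Rightarrow> nat \<Rightarrow> (nat \<Rightarrow> int) \<Rightarrow> vert \<Rightarrow> int" where
  "phi b l d (Main i j) = psi b l d i j"
| "phi b l d (TIn i j p) = psi b l d i j - 1 - int (length p)"
| "phi b l d (TOut i j p) = psi b l d i j + 1 + int (length p)"
| "phi b l d (PathV i j j' k) = min (psi b l d i j + 1 + int b + int k)
     (psi b l d (Suc i) j' - 1 - int b + int (plen b l i j j') - int k)"

lemma wH_ge: assumes "l \<ge> 1" shows "2 * b + 3 \<le> wH b l i j j'"
proof -
  have "Suc b \<le> sH b" using b_le_pow[of b] by (simp add: sH_def)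
  moreover have "sH b \<le> (sH b)^2" by (simp add: power2_eq_square)
  moreover have "3 * (sH b)^2 \<le> AH b l" using assms by (simp add: AH_def)
  moreover have "AH b l \<le> wH b l i j j'" by (simp add: wH_def)
  ultimately show ?thesis by linarith
qed

lemma length_bits[simp]: "length (bits b x) = b"
  by (simp add: bits_def)

lemma phi_pnode:
  assumes H: "Hedge b l i j j'" and "b \<ge> 1" "l \<ge> 1" and dB: "\<forall>k<l. \<bar>d k\<bar> \<le> int (sH b)"
    and k: "k \<le> plen b l i j j'"
  shows "phi b l d (pnode b l i j j' k) = min (psi b l d i j + 1 + int b + int k)
     (psi b l d (Suc i) j' - 1 - int b + int (plen b l i j j') - int k)"
proof -
  have w: "2 * b + 3 \<le> wH b l i j j'" using wH_ge assms by blast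
  have P: "int (plen b l i j j') = int (wH b l i j j') - 2 * int b - 2"
    using w by (simp add: plen_def of_nat_diff)
  have P0: "plen b l i j j' \<noteq> 0" using w by (simp add: plen_def)
  note bd = psi_bounds[OF H assms(2,3) dB]
  show ?thesis
  proof (cases "k = 0")
    case True
    then show ?thesis using bd P by (simp add: pnode_def min_def)
  next
    case False
    show ?thesis
    proof (cases "k = plen b l i j j'")
      case True
      then show ?thesis using bd P False by (simp add: pnode_def min_def)
    next
      case False2: False
      then show ?thesis using False by (simp add: pnode_def)
    qed
  qed
qed

lemma phi_lip:
  assumes "b \<ge> 1" "l \<ge> 1" and dB: "\<forall>k<l. \<bar>d k\<bar> \<le> int (sH b)"
    and g: "Garc b l x y"
  shows "\<bar>phi b l d x - phi b l d y\<bar> \<le> 1"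
  using g unfolding Garc_def
proof (elim disjE exE conjE)
  fix i j j' k
  assume H: "Hedge b l i j j'" and k: "k < plen b l i j j'"
    and x: "x = pnode b l i j j' k" and y: "y = pnode b l i j j' (Suc k)"
  show ?thesis
    unfolding x y phi_pnode[OF H assms(1,2) dB] phi_pnode[OF H assms(1,2) dB less_imp_le[OF k]]
      phi_pnode[OF H assms(1,2) dB Suc_leI[OF k]]
    by (simp add: min_def)
qed auto

lemma walk_pot:
  assumes "b \<ge> 1" "l \<ge> 1" and dB: "\<forall>k<l. \<bar>d k\<bar> \<le> int (sH b)"
    and "wk V (GE b l) xs"
  shows "phi b l d (last xs) - phi b l d (hd xs) \<le> int (length xs) - 1"
proof (rule wk_pot[OF _ assms(4)])
  fix x y assume "GE b l x y"
  then show "\<bar>phi b l d x - phi b l d y\<bar> \<le> 1"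
    unfolding GE_def using phi_lip[OF assms(1,2) dB, of x y] phi_lip[OF assms(1,2) dB, of y x]
    by auto
qed



fun below :: "nat \<Rightarrow> vert \<Rightarrow> bool" where
  "below l (Main i j) = (i < l)"
| "below l (TIn i j p) = (i \<le> l)"
| "below l (TOut i j p) = (i < l)"
| "below l (PathV i j j' k) = (i < l)"

lemma below_pnode: "below l (pnode b l' i j j' k) = (i < l)"
  by (auto simp: pnode_def)

lemma below_Garc: "Garc b l x y \<Longrightarrow> below l x \<noteq> below l y \<Longrightarrow> \<exists>j. x = Main l j \<or> y = Main l j"
  unfolding Garc_def by (auto simp: below_pnode)

lemma below_GE: "GE b l x y \<Longrightarrow> below l x \<Longrightarrow> \<not> below l y \<Longrightarrow> \<exists>j. y = Main l j"
  unfolding GE_def using below_Garc[of b l x y] below_Garc[of b l y x] by auto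

lemma cut:
  "wk V (GE b l) xs \<Longrightarrow> below l (hd xs) \<Longrightarrow> \<not> below l (last xs) \<Longrightarrow>
    \<exists>ys j zs. xs = ys @ Main l j # zs"
proof (induction xs)
  case Nil then show ?case by simp
next
  case (Cons x xs)
  show ?case
  proof (cases xs)
    case Nil then show ?thesis using Cons.prems by simp
  next
    case (Cons y ys)
    have e: "GE b l x y" and w: "wk V (GE b l) xs" using Cons Cons.prems by auto
    show ?thesis
    proof (cases "below l y")
      case True
      then obtain ys' j zs where "xs = ys' @ Main l j # zs"
        using Cons.IH w Cons Cons.prems by auto
      then show ?thesis by (intro exI[of _ "x # ys'"]) auto
    next
      case False
      then obtain j where "y = Main l j" using below_GE[OF e] Cons.prems by auto
      then show ?thesis using Cons by (intro exI[of _ "[x]"]) auto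
    qed
  qed
qed

lemma ph_vals: "k < l \<Longrightarrow> ph l k 0 = 0 \<and> ph l k l = 1 \<and> ph l k (2 * l) = 2"
  by (auto simp: ph_def)

lemma psi_low: "psi b l d l t - psi b l d 0 x =
   int (AH b l) * int l + (\<Sum>k<l. - 2 * d k * (int (t ! k) - int (x ! k)) - (d k)^2)"
proof -
  have "psi b l d l t - psi b l d 0 x = int (AH b l) * int l +
     ((\<Sum>k<l. - 2 * d k * int (t ! k) - int (ph l k l) * (d k)^2)
      - (\<Sum>k<l. - 2 * d k * int (x ! k) - int (ph l k 0) * (d k)^2))"
    unfolding psi_def by simp
  also have "(\<Sum>k<l. - 2 * d k * int (t ! k) - int (ph l k l) * (d k)^2)
      - (\<Sum>k<l. - 2 * d k * int (x ! k) - int (ph l k 0) * (d k)^2)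
    = (\<Sum>k<l. - 2 * d k * (int (t ! k) - int (x ! k)) - (d k)^2)"
    unfolding sum_subtractf[symmetric]
    by (rule sum.cong[OF refl]) (simp add: ph_vals algebra_simps)
  finally show ?thesis .
qed

lemma psi_high: "psi b l d (2 * l) y - psi b l d l t =
   int (AH b l) * int l + (\<Sum>k<l. - 2 * d k * (int (y ! k) - int (t ! k)) - (d k)^2)"
proof -
  have "psi b l d (2 * l) y - psi b l d l t = int (AH b l) * int l +
     ((\<Sum>k<l. - 2 * d k * int (y ! k) - int (ph l k (2 * l)) * (d k)^2)
      - (\<Sum>k<l. - 2 * d k * int (t ! k) - int (ph l k l) * (d k)^2))"
    unfolding psi_def by (simp add: algebra_simps)
  also have "(\<Sum>k<l. - 2 * d k * int (y ! k) - int (ph l k (2 * l)) * (d k)^2)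
      - (\<Sum>k<l. - 2 * d k * int (t ! k) - int (ph l k l) * (d k)^2)
    = (\<Sum>k<l. - 2 * d k * (int (y ! k) - int (t ! k)) - (d k)^2)"
    unfolding sum_subtractf[symmetric]
    by (rule sum.cong[OF refl]) (simp add: ph_def algebra_simps)
  finally show ?thesis .
qed

lemma midid: "(x::int) + y = 2 * z \<Longrightarrow> (x - z)^2 + (z - y)^2 + 2 * (t - z)^2 = (x - t)^2 + (t - y)^2"
proof -
  assume "x + y = 2 * z"
  then show ?thesis unfolding power2_eq_square by algebra
qed

lemma absdiff: "(a::nat) < s \<Longrightarrow> c < s \<Longrightarrow> \<bar>int a - int c\<bar> \<le> int s"
  by arith

definition dsq :: "nat \<Rightarrow> nat \<Rightarrow> nat" where "dsq a c = (nat \<bar>int a - int c\<bar>)^2"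

lemma dsq_int: "int (dsq a c) = (int a - int c)^2"
  unfolding dsq_def by simp

definition thr :: "nat \<Rightarrow> nat \<Rightarrow> nat list \<Rightarrow> nat list \<Rightarrow> nat list \<Rightarrow> nat" where
  "thr b l X z Y = 2 * l * AH b l + (\<Sum>k<l. dsq (X ! k) (z ! k) + dsq (z ! k) (Y ! k))"

lemma idx_bound: "j \<in> idx b l \<Longrightarrow> k < l \<Longrightarrow> j ! k < sH b"
  by (simp add: idx_def)

lemma lower:
  assumes "b \<ge> 1" "l \<ge> 1" and X: "X \<in> idx b l" and Y: "Y \<in> idx b l" and z: "z \<in> idx b l"
    and mid: "\<forall>k<l. X ! k + Y ! k = 2 * z ! k" and zD: "z \<in> Dl"
  shows "enat (thr b l X z Y + 1) \<le> gdist (GVdel b l Dl) (GE b l) (Main 0 X) (Main (2 * l) Y)"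
  unfolding gdist_def
proof (rule INF_greatest)
  let ?V = "GVdel b l Dl"
  fix xs assume "xs \<in> {xs. is_walk ?V (GE b l) xs \<and> hd xs = Main 0 X \<and> last xs = Main (2 * l) Y}"
  then have w: "wk ?V (GE b l) xs" and h: "hd xs = Main 0 X" and la: "last xs = Main (2 * l) Y"
    by (auto simp: is_walk_wk)
  obtain ys j zs where xs: "xs = ys @ Main l j # zs"
    using cut[OF w] h la assms(2) by auto
  have "Main l j \<in> ?V" using wk_set[OF w] xs by auto
  then have j: "j \<in> idx b l" "j \<notin> Dl" by (auto simp: GVdel_def GV_def)
  have jz: "j \<noteq> z" using j zD by auto
  have w1: "wk ?V (GE b l) (ys @ [Main l j])" and w2: "wk ?V (GE b l) (Main l j # zs)"
    using wk_split[of ?V "GE b l" ys "Main l j" zs] w xs by auto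
  define d1 where "d1 k = int (X ! k) - int (j ! k)" for k
  define d2 where "d2 k = int (j ! k) - int (Y ! k)" for k
  have d1B: "\<forall>k<l. \<bar>d1 k\<bar> \<le> int (sH b)"
    using idx_bound[OF X] idx_bound[OF j(1)] by (auto simp: d1_def intro!: absdiff)
  have d2B: "\<forall>k<l. \<bar>d2 k\<bar> \<le> int (sH b)"
    using idx_bound[OF Y] idx_bound[OF j(1)] by (auto simp: d2_def intro!: absdiff)
  have hd1: "hd (ys @ [Main l j]) = Main 0 X" using h xs by (cases ys) auto
  have p1: "psi b l d1 l j - psi b l d1 0 X \<le> int (length ys)"
    using walk_pot[OF assms(1,2) d1B w1] hd1 by simp
  have p2: "psi b l d2 (2 * l) Y - psi b l d2 l j \<le> int (length zs)"
    using walk_pot[OF assms(1,2) d2B w2] la xs by simp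
  have e1: "psi b l d1 l j - psi b l d1 0 X = int (AH b l) * int l + (\<Sum>k<l. (d1 k)^2)"
    unfolding psi_low by (simp add: d1_def power2_eq_square algebra_simps)
  have e2: "psi b l d2 (2 * l) Y - psi b l d2 l j = int (AH b l) * int l + (\<Sum>k<l. (d2 k)^2)"
    unfolding psi_high by (simp add: d2_def power2_eq_square algebra_simps)
  have lj: "length j = l" "length z = l" using j(1) z by (auto simp: idx_def)
  obtain k0 where k0: "k0 < l" "j ! k0 \<noteq> z ! k0"
    using jz lj nth_equalityI by metis
  have pt: "(int (X ! k) - int (z ! k))^2 + (int (z ! k) - int (Y ! k))^2 + 2 * (int (j ! k) - int (z ! k))^2
      = (d1 k)^2 + (d2 k)^2" if "k < l" for k
  proof -
    have "int (X ! k) + int (Y ! k) = 2 * int (z ! k)" using mid that by (metis of_nat_add of_nat_mult of_nat_numeral)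
    then show ?thesis unfolding d1_def d2_def by (rule midid)
  qed
  have "(\<Sum>k<l. (int (X ! k) - int (z ! k))^2 + (int (z ! k) - int (Y ! k))^2)
        < (\<Sum>k<l. (d1 k)^2 + (d2 k)^2)"
  proof (rule sum_strict_mono_ex1)
    show "\<forall>x\<in>{..<l}. (int (X ! x) - int (z ! x))^2 + (int (z ! x) - int (Y ! x))^2 \<le> (d1 x)^2 + (d2 x)^2"
      using pt by (auto simp flip: pt)
    have pos: "0 < (int (j ! k0) - int (z ! k0))^2" using k0 by simp
    have "(int (X ! k0) - int (z ! k0))^2 + (int (z ! k0) - int (Y ! k0))^2 < (d1 k0)^2 + (d2 k0)^2"
      using pt[OF k0(1)] pos by linarith
    then show "\<exists>a\<in>{..<l}. (int (X ! a) - int (z ! a))^2 + (int (z ! a) - int (Y ! a))^2 < (d1 a)^2 + (d2 a)^2"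
      using k0(1) by (intro bexI[of _ k0]) auto
  qed simp
  moreover have "int (thr b l X z Y) = 2 * int l * int (AH b l) +
      (\<Sum>k<l. (int (X ! k) - int (z ! k))^2 + (int (z ! k) - int (Y ! k))^2)"
    unfolding thr_def by (simp add: dsq_int)
  moreover have "length xs - 1 = length ys + length zs" using xs by simp
  moreover have "(\<Sum>k<l. (d1 k)^2 + (d2 k)^2) = (\<Sum>k<l. (d1 k)^2) + (\<Sum>k<l. (d2 k)^2)"
    by (simp add: sum.distrib)
  moreover have "2 * int l * int (AH b l) = int (AH b l) * int l + int (AH b l) * int l" by simp
  ultimately have "int (thr b l X z Y) + 1 \<le> int (length ys) + int (length zs)"
    using p1 p2 e1 e2 by linarith
  then have "int (thr b l X z Y + 1) \<le> int (length xs - 1)" using xs by simp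
  then show "enat (thr b l X z Y + 1) \<le> enat (length xs - 1)" by simp
qed



lemma GVdel_mem:
  assumes "v \<in> GV b l" "\<forall>j. v \<noteq> Main l j"
  shows "v \<in> GVdel b l Dl"
  using assms by (auto simp: GVdel_def)

lemma edge_reach:
  assumes b1: "b \<ge> 1" and l1: "l \<ge> 1" and H: "Hedge b l i j j'"
    and m1: "Main i j \<in> GVdel b l Dl" and m2: "Main (Suc i) j' \<in> GVdel b l Dl"
  shows "reach (GVdel b l Dl) (GE b l) (Main i j) (Main (Suc i) j') (wH b l i j j')"
proof -
  let ?V = "GVdel b l Dl"
  let ?E = "GE b l"
  let ?c = "cH l i - 1"
  let ?P = "plen b l i j j'"
  have i: "i < 2 * l" and j: "j \<in> idx b l" and j': "j' \<in> idx b l"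
    using H by (auto simp: Hedge_def)
  have w: "2 * b + 3 \<le> wH b l i j j'" using wH_ge l1 by blast
  have P0: "?P \<noteq> 0" using w by (simp add: plen_def)
  have Pw: "wH b l i j j' = 1 + b + ?P + b + 1" using w by (simp add: plen_def)
  have TO: "TOut i j p \<in> ?V" if "length p \<le> b" for p
    using that i j by (intro GVdel_mem) (auto simp: GV_def)
  have TI: "TIn (Suc i) j' p \<in> ?V" if "length p \<le> b" for p
    using that i j' by (intro GVdel_mem) (auto simp: GV_def)
  have PN: "pnode b l i j j' k \<in> ?V" if "k \<le> ?P" for k
    using that H TO TI by (auto simp: pnode_def intro!: GVdel_mem simp: GV_def)
  have s1: "reach ?V ?E (Main i j) (TOut i j []) 1"
    by (rule reach_edge[OF m1 TO]) (use i j in \<open>auto simp: GE_def Garc_def\<close>)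
  define q where "q = bits b (j' ! ?c)"
  have lq: "length q = b" by (simp add: q_def)
  have s2: "n \<le> b \<Longrightarrow> reach ?V ?E (TOut i j (take (b - n) q)) (TOut i j q) n" for n
  proof (induction n)
    case 0 then show ?case using lq TO by (simp add: reach.r0)
  next
    case (Suc n)
    have e: "take (b - n) q = take (b - Suc n) q @ [q ! (b - Suc n)]"
      using Suc.prems lq by (metis Suc_diff_Suc Suc_le_lessD diff_less_Suc take_Suc_conv_app_nth diff_le_self le_less_trans)
    have "?E (TOut i j (take (b - Suc n) q)) (TOut i j (take (b - n) q))"
      unfolding GE_def Garc_def using e i j Suc.prems lq by auto
    then show ?case using Suc TO[of "take (b - Suc n) q"] lq by (auto intro: reach.rS)
  qed
  have s2': "reach ?V ?E (TOut i j []) (TOut i j q) b" using s2[of b] by simp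
  have s3: "n \<le> ?P \<Longrightarrow> reach ?V ?E (pnode b l i j j' (?P - n)) (pnode b l i j j' ?P) n" for n
  proof (induction n)
    case 0 then show ?case using PN by (simp add: reach.r0)
  next
    case (Suc n)
    have e: "Suc (?P - Suc n) = ?P - n" using Suc.prems by simp
    have "?E (pnode b l i j j' (?P - Suc n)) (pnode b l i j j' (?P - n))"
      unfolding GE_def Garc_def using H Suc.prems e[symmetric]
      by (intro disjI1 disjI2) (rule exI[of _ i], rule exI[of _ j], rule exI[of _ j'], rule exI[of _ "?P - Suc n"], auto)
    then show ?case using Suc PN[of "?P - Suc n"] by (auto intro: reach.rS)
  qed
  have s3': "reach ?V ?E (TOut i j q) (TIn (Suc i) j' (bits b (j ! ?c))) ?P"
    using s3[of ?P] P0 by (simp add: pnode_def q_def)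
  define r where "r = bits b (j ! ?c)"
  have lr: "length r = b" by (simp add: r_def)
  have s4: "n \<le> b \<Longrightarrow> reach ?V ?E (TIn (Suc i) j' (take n r)) (TIn (Suc i) j' []) n" for n
  proof (induction n)
    case 0 then show ?case using TI by (simp add: reach.r0)
  next
    case (Suc n)
    have e: "take (Suc n) r = take n r @ [r ! n]"
      using Suc.prems lr by (simp add: take_Suc_conv_app_nth)
    have "?E (TIn (Suc i) j' (take (Suc n) r)) (TIn (Suc i) j' (take n r))"
      unfolding GE_def Garc_def using e i j' Suc.prems lr by auto
    then show ?case using Suc TI[of "take (Suc n) r"] lr by (auto intro: reach.rS)
  qed
  have s4': "reach ?V ?E (TIn (Suc i) j' r) (TIn (Suc i) j' []) b" using s4[of b] lr by simp
  have s5: "reach ?V ?E (TIn (Suc i) j' []) (Main (Suc i) j') 1"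
    by (rule reach_edge[OF TI m2]) (use i j' in \<open>auto simp: GE_def Garc_def\<close>)
  have "reach ?V ?E (Main i j) (Main (Suc i) j') (1 + b + ?P + b + 1)"
    using reach_trans[OF reach_trans[OF reach_trans[OF reach_trans[OF s1 s2'] s3'[folded r_def]] s4'] s5] .
  then show ?thesis using Pw by simp
qed



definition J :: "nat \<Rightarrow> nat list \<Rightarrow> nat list \<Rightarrow> nat list \<Rightarrow> nat \<Rightarrow> nat list" where
  "J l X z Y i = map (\<lambda>k. [X ! k, z ! k, Y ! k] ! ph l k i) [0..<l]"

lemma J_nth: "k < l \<Longrightarrow> J l X z Y i ! k = [X ! k, z ! k, Y ! k] ! ph l k i"
  by (simp add: J_def)

lemma J_len[simp]: "length (J l X z Y i) = l" by (simp add: J_def)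

lemma J_idx: "X \<in> idx b l \<Longrightarrow> z \<in> idx b l \<Longrightarrow> Y \<in> idx b l \<Longrightarrow> J l X z Y i \<in> idx b l"
  unfolding idx_def by (auto simp: J_nth ph_def)

lemma J_0: "length X = l \<Longrightarrow> J l X z Y 0 = X"
  by (intro nth_equalityI) (auto simp: J_nth ph_def)
lemma J_l: "length z = l \<Longrightarrow> J l X z Y l = z"
  by (intro nth_equalityI) (auto simp: J_nth ph_def)
lemma J_2l: "length Y = l \<Longrightarrow> J l X z Y (2 * l) = Y"
  by (intro nth_equalityI) (auto simp: J_nth ph_def)

lemma J_Hedge:
  assumes "X \<in> idx b l" "z \<in> idx b l" "Y \<in> idx b l" "i < 2 * l"
  shows "Hedge b l i (J l X z Y i) (J l X z Y (Suc i))"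
  unfolding Hedge_def using assms J_idx[OF assms(1-3)]
  by (auto simp: J_nth ph_step)

lemma J_w_low:
  assumes "i < l"
  shows "wH b l i (J l X z Y i) (J l X z Y (Suc i)) = AH b l + dsq (X ! i) (z ! i)"
proof -
  have "cH l i - 1 = i" using assms by (simp add: cH_def)
  moreover have "ph l i i = 0" "ph l i (Suc i) = 1" using assms by (auto simp: ph_def)
  ultimately show ?thesis using assms by (simp add: wH_def dsq_def J_nth)
qed

lemma J_w_high:
  assumes "Suc n \<le> l" "i = 2 * l - Suc n"
  shows "wH b l i (J l X z Y i) (J l X z Y (Suc i)) = AH b l + dsq (z ! n) (Y ! n)"
proof -
  have "\<not> i < l" using assms by arith
  then have "cH l i = 2 * l - i" by (simp add: cH_def)
  then have "cH l i - 1 = n" using assms by arith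
  moreover have "ph l n i = 1" "ph l n (Suc i) = 2" using assms by (auto simp: ph_def)
  ultimately show ?thesis using assms by (simp add: wH_def dsq_def J_nth)
qed

lemma upper:
  assumes b1: "b \<ge> 1" and l1: "l \<ge> 1" and X: "X \<in> idx b l" and Y: "Y \<in> idx b l" and z: "z \<in> idx b l"
    and zD: "z \<notin> Dl"
  shows "gdist (GVdel b l Dl) (GE b l) (Main 0 X) (Main (2 * l) Y) \<le> enat (thr b l X z Y)"
proof -
  let ?V = "GVdel b l Dl"
  let ?E = "GE b l"
  let ?J = "J l X z Y"
  have lens: "length X = l" "length Y = l" "length z = l" using X Y z by (auto simp: idx_def)
  have Jin: "Main i (?J i) \<in> ?V" if "i \<le> 2 * l" for i
  proof (cases "i = l")
    case True then show ?thesis using z zD lens that by (auto simp: GVdel_def GV_def J_l)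
  next
    case False then show ?thesis using J_idx[OF X z Y] that by (auto simp: GVdel_def GV_def)
  qed
  have step: "reach ?V ?E (Main i (?J i)) (Main (Suc i) (?J (Suc i))) (wH b l i (?J i) (?J (Suc i)))"
    if "i < 2 * l" for i
    using edge_reach[OF b1 l1 J_Hedge[OF X z Y that] Jin Jin] that by simp
  have low: "n \<le> l \<Longrightarrow> reach ?V ?E (Main 0 X) (Main n (?J n)) (n * AH b l + (\<Sum>k<n. dsq (X ! k) (z ! k)))" for n
  proof (induction n)
    case 0 then show ?case using Jin[of 0] lens by (simp add: J_0 reach.r0)
  next
    case (Suc n)
    have "reach ?V ?E (Main 0 X) (Main (Suc n) (?J (Suc n)))
       (n * AH b l + (\<Sum>k<n. dsq (X ! k) (z ! k)) + (AH b l + dsq (X ! n) (z ! n)))"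
      using reach_trans[OF Suc.IH[OF Suc_leD[OF Suc.prems]] step[of n]] Suc.prems J_w_low[of n l b X z Y]
      by simp
    then show ?case by (simp add: algebra_simps)
  qed
  have high: "n \<le> l \<Longrightarrow> reach ?V ?E (Main (2 * l - n) (?J (2 * l - n))) (Main (2 * l) Y)
      (n * AH b l + (\<Sum>k<n. dsq (z ! k) (Y ! k)))" for n
  proof (induction n)
    case 0 then show ?case using Jin[of "2*l"] lens by (simp add: J_2l reach.r0)
  next
    case (Suc n)
    define i where "i = 2 * l - Suc n"
    have si: "Suc i = 2 * l - n" using Suc.prems by (simp add: i_def)
    have ilt: "i < 2 * l" using Suc.prems by (simp add: i_def)
    have st: "reach ?V ?E (Main i (?J i)) (Main (2 * l - n) (?J (2 * l - n))) (AH b l + dsq (z ! n) (Y ! n))"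
      using step[OF ilt] J_w_high[OF Suc.prems i_def] si by simp
    have "reach ?V ?E (Main i (?J i)) (Main (2 * l) Y)
       ((AH b l + dsq (z ! n) (Y ! n)) + (n * AH b l + (\<Sum>k<n. dsq (z ! k) (Y ! k))))"
      using reach_trans[OF st Suc.IH[OF Suc_leD[OF Suc.prems]]] .
    then show ?case by (simp add: algebra_simps i_def)
  qed
  have "reach ?V ?E (Main 0 X) (Main (2 * l) Y)
      ((l * AH b l + (\<Sum>k<l. dsq (X ! k) (z ! k))) + (l * AH b l + (\<Sum>k<l. dsq (z ! k) (Y ! k))))"
  proof -
    have h: "reach ?V ?E (Main l (?J l)) (Main (2 * l) Y) (l * AH b l + (\<Sum>k<l. dsq (z ! k) (Y ! k)))"
      using high[of l] by simp
    show ?thesis using reach_trans[OF low[OF le_refl] h] .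
  qed
  moreover have "(l * AH b l + (\<Sum>k<l. dsq (X ! k) (z ! k))) + (l * AH b l + (\<Sum>k<l. dsq (z ! k) (Y ! k)))
      = thr b l X z Y"
    unfolding thr_def by (simp add: sum.distrib algebra_simps)
  ultimately show ?thesis using reach_gdist by metis
qed



lemma digsum: "(\<Sum>k<n. (a div h^k mod h) * h^k) = (a::nat) mod h^n"
proof (induction n)
  case 0 then show ?case by simp
next
  case (Suc n)
  have "a mod h ^ Suc n = h^n * (a div h^n mod h) + a mod h^n"
    unfolding power_Suc2 by (rule mod_mult2_eq)
  then show ?case using Suc by (simp add: algebra_simps)
qed

lemma bits_inj: "inj_on (bits e) {..<2^e}"
proof (rule inj_onI)
  fix a a' assume a: "a \<in> {..<(2::nat)^e}" and a': "a' \<in> {..<(2::nat)^e}" and eq: "bits e a = bits e a'"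
  have od: "odd (a div 2^t) = odd (a' div 2^t)" if "t < e" for t
  proof -
    have "bits e a ! t = bits e a' ! t" using eq by simp
    then show ?thesis using that by (simp add: bits_def)
  qed
  have "n \<le> e \<Longrightarrow> a mod 2^n = a' mod 2^n" for n
  proof (induction n)
    case 0 then show ?case by simp
  next
    case (Suc n)
    have "a mod 2 ^ Suc n = 2^n * (a div 2^n mod 2) + a mod 2^n"
      unfolding power_Suc2 by (rule mod_mult2_eq)
    moreover have "a' mod 2 ^ Suc n = 2^n * (a' div 2^n mod 2) + a' mod 2^n"
      unfolding power_Suc2 by (rule mod_mult2_eq)
    moreover have "a div 2^n mod 2 = a' div 2^n mod 2"
      using od[of n] Suc.prems by (simp add: mod2_eq_if)
    ultimately show ?case using Suc by simp
  qed
  then have "a mod 2^e = a' mod 2^e" by simp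
  then show "a = a'" using a a' by simp
qed

definition hh :: "nat \<Rightarrow> nat" where "hh b = 2 ^ (b - 1)"
definition dig :: "nat \<Rightarrow> nat \<Rightarrow> nat \<Rightarrow> nat" where "dig b a k = a div (hh b)^k mod hh b"
definition Xv :: "nat \<Rightarrow> nat \<Rightarrow> nat \<Rightarrow> nat list" where
  "Xv b l a = map (\<lambda>k. 2 * dig b a k) [0..<l]"
definition zv :: "nat \<Rightarrow> nat \<Rightarrow> nat \<Rightarrow> nat \<Rightarrow> nat list" where
  "zv b l a c = map (\<lambda>k. dig b a k + dig b c k) [0..<l]"
definition val :: "nat \<Rightarrow> nat \<Rightarrow> nat list \<Rightarrow> nat" where
  "val b l z = (\<Sum>k<l. z ! k * (hh b)^k)"
definition Dset :: "nat \<Rightarrow> nat \<Rightarrow> bool list \<Rightarrow> nat list set" where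
  "Dset b l S = {z \<in> idx b l. \<not> S ! (val b l z mod 2 ^ ((b - 1) * l))}"

lemma hh_pos: "0 < hh b" by (simp add: hh_def)
lemma dig_lt: "dig b a k < hh b" using hh_pos by (simp add: dig_def)
lemma sH_hh: "b \<ge> 1 \<Longrightarrow> sH b = 2 * hh b"
  by (cases b) (auto simp: sH_def hh_def)

lemma Xv_idx: "b \<ge> 1 \<Longrightarrow> Xv b l a \<in> idx b l"
  using dig_lt[of b a] by (auto simp: idx_def Xv_def sH_hh)

lemma dig2: "dig b a k + dig b c k < 2 * hh b"
  using dig_lt[of b a k] dig_lt[of b c k] by linarith

lemma zv_idx: "b \<ge> 1 \<Longrightarrow> zv b l a c \<in> idx b l"
  using dig2[of b a _ c] by (auto simp: idx_def zv_def sH_hh)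

lemma mid: "\<forall>k<l. Xv b l a ! k + Xv b l c ! k = 2 * zv b l a c ! k"
  by (simp add: Xv_def zv_def)

lemma m_eq: "(2::nat) ^ ((b - 1) * l) = hh b ^ l"
  by (simp add: hh_def power_mult)

lemma val_zv: assumes "a < 2 ^ ((b - 1) * l)" "c < 2 ^ ((b - 1) * l)"
  shows "val b l (zv b l a c) mod 2 ^ ((b - 1) * l) = (a + c) mod 2 ^ ((b - 1) * l)"
proof -
  have "val b l (zv b l a c) = (\<Sum>k<l. dig b a k * hh b ^ k) + (\<Sum>k<l. dig b c k * hh b ^ k)"
    unfolding val_def zv_def by (simp add: sum.distrib algebra_simps)
  also have "\<dots> = a mod hh b ^ l + c mod hh b ^ l" unfolding dig_def digsum ..
  also have "\<dots> = a + c"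
  proof -
    have "a < hh b ^ l" "c < hh b ^ l" using assms unfolding m_eq by auto
    then show ?thesis by simp
  qed
  finally show ?thesis by simp
qed



theorem mainTheorem8:
  fixes b l :: nat
    and f :: "bool list \<Rightarrow> bool list \<Rightarrow> enat"
    and lab :: "nat list set \<Rightarrow> vert \<Rightarrow> bool list"
  assumes "b \<ge> 1" and "l \<ge> 1"
    and scheme: "\<forall>D. D \<subseteq> idx b l \<longrightarrow>
                   (\<forall>u\<in>GVdel b l D. \<forall>v\<in>GVdel b l D.
                      f (lab D u) (lab D v) = gdist (GVdel b l D) (GE b l) u v)"
  shows "\<exists>D. D \<subseteq> idx b l \<and> (\<exists>u\<in>GVdel b l D.
           int (length (lab D u)) \<ge> int (SumIndex (2 ^ ((b - 1) * l))) - int (b * l))"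
proof (rule ccontr)
  assume neg: "\<not> ?thesis"
  define m where "m = (2::nat) ^ ((b - 1) * l)"
  define e where "e = (b - 1) * l"
  define SI where "SI = SumIndex m"
  have hyp: "length (lab D u) + b * l < SI" if "D \<subseteq> idx b l" "u \<in> GVdel b l D" for D u
  proof -
    have "\<not> (int (length (lab D u)) \<ge> int (SumIndex (2 ^ ((b - 1) * l))) - int (b * l))"
      using neg that by blast
    then show ?thesis unfolding SI_def m_def by linarith
  qed
  have eb: "e \<le> b * l" by (simp add: e_def)
  have Dsub: "Dset b l S \<subseteq> idx b l" for S by (auto simp: Dset_def)
  have uin: "Main 0 (Xv b l a) \<in> GVdel b l D" for a D
    using Xv_idx[OF assms(1)] assms(2) by (auto simp: GVdel_def GV_def)
  have vin: "Main (2 * l) (Xv b l a) \<in> GVdel b l D" for a D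
    using Xv_idx[OF assms(1)] assms(2) by (auto simp: GVdel_def GV_def)
  define dec where "dec = inv_into {..<m} (bits e)"
  have dec: "dec (bits e a) = a" if "a < m" for a
    unfolding dec_def using bits_inj[of e] that by (simp add: m_def e_def inv_into_f_f)
  define MA where "MA S a = lab (Dset b l S) (Main 0 (Xv b l a)) @ bits e a" for S a
  define MB where "MB S a = lab (Dset b l S) (Main (2 * l) (Xv b l a)) @ bits e a" for S a
  define R where "R ma mb = (f (take (length ma - e) ma) (take (length mb - e) mb)
     \<le> enat (thr b l (Xv b l (dec (drop (length ma - e) ma)))
                    (zv b l (dec (drop (length ma - e) ma)) (dec (drop (length mb - e) mb)))
                    (Xv b l (dec (drop (length mb - e) mb)))))" for ma mb
  have prot: "sumindex_protocol m (SI - 1) MA MB R"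
    unfolding sumindex_protocol_def
  proof (intro allI impI conjI)
    fix S :: "bool list" and a c :: nat assume h: "length S = m \<and> a < m \<and> c < m"
    let ?D = "Dset b l S"
    let ?u = "Main 0 (Xv b l a)"
    let ?v = "Main (2 * l) (Xv b l c)"
    have RR: "R (MA S a) (MB S c) = (gdist (GVdel b l ?D) (GE b l) ?u ?v
               \<le> enat (thr b l (Xv b l a) (zv b l a c) (Xv b l c)))"
      unfolding R_def MA_def MB_def using h dec scheme Dsub[of S] uin vin by simp
    have z: "zv b l a c \<in> idx b l" using zv_idx[OF assms(1)] .
    have vz: "val b l (zv b l a c) mod m = (a + c) mod m"
      using val_zv[of a b l c] h by (simp add: m_def)
    show "R (MA S a) (MB S c) = S ! ((a + c) mod m)"
    proof (cases "S ! ((a + c) mod m)")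
      case True
      then have "zv b l a c \<notin> ?D" using vz by (simp add: Dset_def m_def)
      then show ?thesis using upper[OF assms(1,2) Xv_idx[OF assms(1)] Xv_idx[OF assms(1)] z] True RR
        by simp
    next
      case False
      then have "zv b l a c \<in> ?D" using vz z by (simp add: Dset_def m_def)
      then have "enat (thr b l (Xv b l a) (zv b l a c) (Xv b l c) + 1) \<le> gdist (GVdel b l ?D) (GE b l) ?u ?v"
        using lower[OF assms(1,2) Xv_idx[OF assms(1)] Xv_idx[OF assms(1)] z mid] by simp
      then show ?thesis using False RR by (auto simp: enat_ord_simps dest: order_trans)
    qed
    show "length (MA S a) \<le> SI - 1"
      using hyp[OF Dsub uin, of S a] eb by (simp add: MA_def)
    show "length (MB S c) \<le> SI - 1"
      using hyp[OF Dsub vin, of S c] eb by (simp add: MB_def)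
  qed
  have "SI \<le> SI - 1"
    unfolding SI_def SumIndex_def using prot[unfolded SI_def SumIndex_def]
    by (intro Least_le) blast
  moreover have "0 < SI" using hyp[OF Dsub uin, of "[]::bool list" 0] by simp
  ultimately show False by simp
qed


end
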